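(* Fix $m\in\mathbb{Z}^+$. Let $f,g\colon X\to \mathbb{Z}$ be functions on a finite set $X$. For $k\in\mathbb{Z}$ and $l\in\mathbb{Z}_{2m}$, let $W_k(l)=\{x\in X\colon kf(x)\equiv l \pmod{2m}\}$. If $$\sum_{x\in W_k(l)}g(x)=\sum_{x\in W_k(l+m)}g(x)\qquad\text{for every } l\in\mathbb{Z}_m$$ holds for $k=1$, then it holds for every odd integer $k$.
   Context: $\mathbb{Z}_m$ denotes the residues $\{0,1,\dots,m-1\}$. *)

theory Defs
  imports Main "HOL-Number_Theory.Cong"
begin

definition W :: "'a set \<Rightarrow> ('a \<Rightarrow> int) \<Rightarrow> int \<Rightarrow> int \<Rightarrow> int \<Rightarrow> 'a set" where
  "W X f m k l = {x \<in> X. [k * f x = l] (mod (2 * m))}"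

definition balanced :: "'a set \<Rightarrow> ('a \<Rightarrow> int) \<Rightarrow> ('a \<Rightarrow> int) \<Rightarrow> int \<Rightarrow> int \<Rightarrow> bool" where
  "balanced X f g m k \<longleftrightarrow>
     (\<forall>l \<in> {0..<m}. (\<Sum>x \<in> W X f m k l. g x) = (\<Sum>x \<in> W X f m k (l + m). g x))"

end

theory Submission
  imports Defs
begin

lemma W_mod: "W X f m k l = W X f m k (l mod (2*m))"
  unfolding W_def cong_def by simp

lemma km_mod:
  fixes k m r :: int assumes "odd k"
  shows "(k * ((r + m) mod (2*m))) mod (2*m) = (k*r + m) mod (2*m)"
proof -
  obtain j where j: "k = 2*j+1" using assms by (metis oddE)
  have "(k * ((r + m) mod (2*m))) mod (2*m) = (k*(r+m)) mod (2*m)"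
    by (simp add: mod_mult_right_eq)
  also have "k*(r+m) = (k*r + m) + j*(2*m)" using j by (simp add: algebra_simps)
  also have "(k*r + m + j*(2*m)) mod (2*m) = (k*r+m) mod (2*m)" by simp
  finally show ?thesis .
qed

lemma decomp:
  fixes m k l :: int
  assumes "m > 0" "finite X"
  shows "(\<Sum>x \<in> W X f m k l. g x) =
    (\<Sum>r \<in> {r \<in> {0..<2*m}. [k*r = l] (mod (2*m))}. \<Sum>x \<in> W X f m 1 r. g x)"
proof -
  let ?R = "{r \<in> {0..<2*m}. [k*r = l] (mod (2*m))}"
  have U: "W X f m k l = (\<Union>r\<in>?R. W X f m 1 r)"
  proof (rule set_eqI, rule iffI)
    fix x assume x: "x \<in> W X f m k l"
    let ?r = "f x mod (2*m)"
    have xx: "k * f x mod (2*m) = l mod (2*m)" using x unfolding W_def cong_def by simp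
    have "k * ?r mod (2*m) = k * f x mod (2*m)" by (rule mod_mult_right_eq)
    hence "?r \<in> ?R" using xx assms(1) unfolding cong_def by simp
    moreover have "x \<in> W X f m 1 ?r" using x unfolding W_def cong_def by simp
    ultimately show "x \<in> (\<Union>r\<in>?R. W X f m 1 r)" by blast
  next
    fix x assume "x \<in> (\<Union>r\<in>?R. W X f m 1 r)"
    then obtain r where r: "r \<in> ?R" "x \<in> W X f m 1 r" by blast
    then have "f x mod (2*m) = r" unfolding W_def cong_def by auto
    moreover have "k * (f x mod (2*m)) mod (2*m) = k * f x mod (2*m)" by (rule mod_mult_right_eq)
    moreover have "k * r mod (2*m) = l mod (2*m)" "x \<in> X" using r unfolding W_def cong_def by auto
    ultimately show "x \<in> W X f m k l" unfolding W_def cong_def by simp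
  qed
  have "(\<Sum>x \<in> (\<Union>r\<in>?R. W X f m 1 r). g x) = (\<Sum>r \<in> ?R. \<Sum>x \<in> W X f m 1 r. g x)"
  proof (rule sum.UNION_disjoint)
    show "finite ?R" by (rule finite_subset[of _ "{0..<2*m}"]) auto
    show "\<forall>r\<in>?R. finite (W X f m 1 r)" using assms(2) unfolding W_def by simp
    show "\<forall>i\<in>?R. \<forall>j\<in>?R. i \<noteq> j \<longrightarrow> W X f m 1 i \<inter> W X f m 1 j = {}"
      unfolding W_def cong_def by auto
  qed
  with U show ?thesis by simp
qed

lemma shiftS:
  fixes m :: int
  assumes "m > 0" "balanced X f g m 1"
  shows "(\<Sum>x \<in> W X f m 1 (r + m). g x) = (\<Sum>x \<in> W X f m 1 r. g x)"
proof -
  define S where "S r = (\<Sum>x \<in> W X f m 1 r. g x)" for r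
  have Smod: "S r = S (r mod (2*m))" for r unfolding S_def using W_mod by metis
  have H: "S l = S (l + m)" if "l \<in> {0..<m}" for l
    using assms(2) that unfolding balanced_def S_def by blast
  define r' where "r' = r mod (2*m)"
  have r': "0 \<le> r'" "r' < 2*m" using assms(1) unfolding r'_def by auto
  show ?thesis
  proof (cases "r' < m")
    case True
    have "S (r+m) = S (r'+m)" unfolding r'_def using Smod
      by (metis mod_add_left_eq)
    also have "\<dots> = S r'" using H[of r'] True r' by simp
    also have "\<dots> = S r" using Smod r'_def by simp
    finally show ?thesis unfolding S_def .
  next
    case False
    define r'' where "r'' = r' - m"
    have "S (r+m) = S (r''+2*m)" unfolding r''_def r'_def using Smod
      by (metis add.commute diff_add_cancel mod_add_left_eq add.assoc mult_2)
    also have "\<dots> = S r''" using Smod by (metis mod_add_self2)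
    also have "\<dots> = S (r''+m)" using H[of r''] False r' unfolding r''_def by simp
    also have "\<dots> = S r" using Smod r'_def r''_def by simp
    finally show ?thesis unfolding S_def .
  qed
qed

theorem lemma4p6:
  fixes X :: "'a set" and f g :: "'a \<Rightarrow> int" and m k :: int
  assumes "m > 0" and "finite X"
    and "balanced X f g m 1"
    and "odd k"
  shows "balanced X f g m k"
  unfolding balanced_def
proof
  fix l assume "l \<in> {0..<m}"
  define S where "S r = (\<Sum>x \<in> W X f m 1 r. g x)" for r
  define R where "R l' = {r \<in> {0..<2*m}. [k*r = l'] (mod (2*m))}" for l'
  define h where "h r = (r + m) mod (2*m)" for r
  have hh: "h (h r) = r" if "r \<in> {0..<2*m}" for r
  proof -
    have "h (h r) = (r + m + m) mod (2*m)" unfolding h_def by (simp add: mod_add_left_eq)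
    also have "\<dots> = (r + 2*m) mod (2*m)" by (simp add: algebra_simps)
    also have "\<dots> = r" using that by simp
    finally show ?thesis .
  qed
  have hR1: "h r \<in> R (l+m)" if "r \<in> R l" for r
  proof -
    have r: "r \<in> {0..<2*m}" "(k*r) mod (2*m) = l mod (2*m)"
      using that unfolding R_def cong_def by auto
    have "(k * h r) mod (2*m) = (k*r + m) mod (2*m)"
      unfolding h_def by (rule km_mod[OF assms(4)])
    also have "\<dots> = (l + m) mod (2*m)" using r(2) by (metis mod_add_left_eq)
    finally show ?thesis using assms(1) unfolding R_def h_def cong_def by auto
  qed
  have hR2: "h r \<in> R l" if "r \<in> R (l+m)" for r
  proof -
    have r: "r \<in> {0..<2*m}" "(k*r) mod (2*m) = (l+m) mod (2*m)"
      using that unfolding R_def cong_def by auto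
    have "(k * h r) mod (2*m) = (k*r + m) mod (2*m)"
      unfolding h_def by (rule km_mod[OF assms(4)])
    also have "\<dots> = (l + m + m) mod (2*m)" using r(2) by (metis mod_add_left_eq)
    also have "\<dots> = (l + 2*m) mod (2*m)" by (simp add: algebra_simps)
    also have "\<dots> = l mod (2*m)" by simp
    finally show ?thesis using assms(1) unfolding R_def h_def cong_def by auto
  qed
  have bij: "bij_betw h (R l) (R (l+m))"
    by (rule bij_betw_byWitness[where f'=h]) (use hh hR1 hR2 R_def in auto)
  have "(\<Sum>x \<in> W X f m k (l+m). g x) = (\<Sum>r \<in> R (l+m). S r)"
    unfolding S_def R_def using decomp[OF assms(1,2)] by blast
  also have "\<dots> = (\<Sum>r \<in> R l. S (h r))"
    using sum.reindex_bij_betw[OF bij, of S] by simp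
  also have "\<dots> = (\<Sum>r \<in> R l. S r)"
  proof (rule sum.cong)
    fix r
    have "S (h r) = S (r + m)" unfolding S_def h_def using W_mod by metis
    also have "\<dots> = S r" unfolding S_def by (rule shiftS[OF assms(1,3)])
    finally show "S (h r) = S r" .
  qed simp
  also have "\<dots> = (\<Sum>x \<in> W X f m k l. g x)"
    unfolding S_def R_def using decomp[OF assms(1,2)] by metis
  finally show "(\<Sum>x \<in> W X f m k l. g x) = (\<Sum>x \<in> W X f m k (l+m). g x)" by simp
qed

end
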